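(* Let $p>1$ and $q>0$ be integers, and let $A\in\mathbb{R}^{(p+q)\times(p+q)}$ with columns $\alpha_1,\dots,\alpha_{p+q}$. Suppose $A$ is a positive operator of $M(p,q)$, i.e. $A\,M(p,q)\subseteq M(p,q)$. Then: (i) for each $i=1,\dots,p$, the transpose of the $i$-th row of $A$ belongs to $L(p,q)$; (ii) for each $i=1,\dots,p$, the column $\alpha_i$ belongs to $M(p,q)$; (iii) for each $i=1,\dots,p$ and every $u=(u_1,\dots,u_q)^\top\in\mathbb{R}^q$ with $\|u\|=1$, the vector $\alpha_i+\sum_{j=1}^q u_j\alpha_{p+j}$ belongs to $M(p,q)$; (iv) for each $i=1,\dots,p$ and each $j=1,\dots,q$, the vector $\alpha_i+\alpha_{p+j}$ belongs to $M(p,q)$; (v) if $A$ is Lyapunov-like on $M(p,q)$, then $e^{tA}\in\operatorname{Aut}(M(p,q))$ for every $t\in\mathbb{R}$, and in particular $e^{tA}$ is a positive operator of $M(p,q)$ for every $t\in\mathbb{R}$.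
   Context: Let $e=(1,\dots,1)\in\mathbb{R}^p$. Identify $\mathbb{R}^p\times\mathbb{R}^q$ with $\mathbb{R}^{p+q}$ (column vectors) with the standard inner product $\langle\cdot,\cdot\rangle$ and Euclidean norm $\|\cdot\|$. Define the extended Lorentz cones \[L(p,q)=\{(x,u)\in\mathbb{R}^p\times\mathbb{R}^q:\ x\ge\|u\|e\}\] (componentwise inequality) and \[M(p,q)=\{(x,u)\in\mathbb{R}^p\times\mathbb{R}^q:\ \langle x,e\rangle\ge\|u\|,\ x\ge 0\}.\] A matrix $A$ is a positive operator of a cone $C$ if $AC\subseteq C$. For a cone $K\subseteq\mathbb{R}^m$, its dual cone is $K^*=\{y:\langle x,y\rangle\ge0\ \forall x\in K\}$, and its complementarity set is $C(K)=\{(x,s):x\in K,\ s\in K^*,\ \langle x,s\rangle=0\}$. A matrix $A$ is Lyapunov-like on $K$ if $\langle Ax,s\rangle=0$ for all $(x,s)\in C(K)$. $\operatorname{Aut}(K)$ denotes the group of invertible linear maps $B$ with $BK=K$. *)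

theory Defs
  imports Complex_Main "Jordan_Normal_Form.Matrix"
begin

text \<open>Vectors of R^(p+q) are JNF vectors of dimension p+q; index k<p is the x-part,
  index p+j (j<q) is the u-part (0-based indices).\<close>

definition vnorm :: "real vec \<Rightarrow> real" where
  "vnorm v = sqrt (\<Sum>i<dim_vec v. (v $ i)^2)"

definition unorm :: "nat \<Rightarrow> nat \<Rightarrow> real vec \<Rightarrow> real" where
  "unorm p q v = sqrt (\<Sum>j<q. (v $ (p + j))^2)"

definition L_cone :: "nat \<Rightarrow> nat \<Rightarrow> real vec set" where
  "L_cone p q = {v \<in> carrier_vec (p + q). \<forall>i<p. v $ i \<ge> unorm p q v}"

definition M_cone :: "nat \<Rightarrow> nat \<Rightarrow> real vec set" where
  "M_cone p q = {v \<in> carrier_vec (p + q).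
      (\<Sum>i<p. v $ i) \<ge> unorm p q v \<and> (\<forall>i<p. v $ i \<ge> 0)}"

definition positive_operator :: "real mat \<Rightarrow> real vec set \<Rightarrow> bool" where
  "positive_operator A K \<longleftrightarrow> (\<lambda>x. A *\<^sub>v x) ` K \<subseteq> K"

definition dual_cone :: "nat \<Rightarrow> real vec set \<Rightarrow> real vec set" where
  "dual_cone n K = {y \<in> carrier_vec n. \<forall>x\<in>K. scalar_prod x y \<ge> 0}"

definition compl_set :: "nat \<Rightarrow> real vec set \<Rightarrow> (real vec \<times> real vec) set" where
  "compl_set n K = {(x, s). x \<in> K \<and> s \<in> dual_cone n K \<and> scalar_prod x s = 0}"

definition lyapunov_like :: "nat \<Rightarrow> real mat \<Rightarrow> real vec set \<Rightarrow> bool" where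
  "lyapunov_like n A K \<longleftrightarrow> (\<forall>(x, s) \<in> compl_set n K. scalar_prod (A *\<^sub>v x) s = 0)"

definition Aut :: "nat \<Rightarrow> real vec set \<Rightarrow> real mat set" where
  "Aut n K = {B \<in> carrier_mat n n. invertible_mat B \<and> (\<lambda>x. B *\<^sub>v x) ` K = K}"

definition mat_exp :: "real \<Rightarrow> real mat \<Rightarrow> real mat" where
  "mat_exp t A = mat (dim_row A) (dim_col A)
     (\<lambda>(i, j). \<Sum>k. (t ^ k / fact k) * (A ^\<^sub>m k) $$ (i, j))"

end

theory Submission
  imports Defs
begin



lemma mult_entry:
  assumes "X \<in> carrier_mat n n" "Y \<in> carrier_mat n n" "i < n" "j < n"
  shows "(X * Y) $$ (i,j) = (\<Sum>l<n. X $$ (i,l) * Y $$ (l,j))"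
  using assms by (simp add: scalar_prod_def atLeast0LessThan)

lemma pow_commute:
  fixes X Y :: "real mat"
  assumes X: "X \<in> carrier_mat n n" and Y: "Y \<in> carrier_mat n n" and c: "X * Y = Y * X"
  shows "Y ^\<^sub>m r * X = X * Y ^\<^sub>m r"
proof (induction r)
  case 0 then show ?case using X Y by simp
next
  case (Suc r)
  have Yr: "Y ^\<^sub>m r \<in> carrier_mat n n" using Y by simp
  have "Y ^\<^sub>m Suc r * X = Y ^\<^sub>m r * (Y * X)" using assoc_mult_mat[OF Yr Y X] by simp
  also have "\<dots> = (Y ^\<^sub>m r * X) * Y" using assoc_mult_mat[OF Yr X Y] c by simp
  also have "\<dots> = X * Y ^\<^sub>m Suc r" using Suc assoc_mult_mat[OF X Yr Y] by simp
  finally show ?case .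
qed

lemma pow_entry_bound:
  fixes X :: "real mat"
  assumes X: "X \<in> carrier_mat n n" and c: "\<And>a b. a < n \<Longrightarrow> b < n \<Longrightarrow> \<bar>X $$ (a,b)\<bar> \<le> c"
  shows "i < n \<Longrightarrow> j < n \<Longrightarrow> \<bar>(X ^\<^sub>m k) $$ (i,j)\<bar> \<le> (real n * c) ^ k"
proof (induction k arbitrary: i j)
  case 0 then show ?case using X by simp
next
  case (Suc k)
  have c0: "0 \<le> c" using c[OF Suc.prems] by linarith
  have "\<bar>(X ^\<^sub>m Suc k) $$ (i,j)\<bar> = \<bar>\<Sum>l<n. (X ^\<^sub>m k) $$ (i,l) * X $$ (l,j)\<bar>"
    using mult_entry[OF pow_carrier_mat[OF X] X Suc.prems, of k] by simp
  also have "\<dots> \<le> (\<Sum>l<n. \<bar>(X ^\<^sub>m k) $$ (i,l) * X $$ (l,j)\<bar>)" by (rule sum_abs)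
  also have "\<dots> \<le> (\<Sum>l<n. (real n * c) ^ k * c)"
    apply (rule sum_mono)
    apply (simp add: abs_mult)
    apply (rule mult_mono)
    using Suc c c0 by auto
  also have "\<dots> = (real n * c) ^ Suc k" by (simp add: algebra_simps)
  finally show ?case .
qed

lemma exp_summable_entry:
  fixes X :: "real mat"
  assumes X: "X \<in> carrier_mat n n" "i < n" "j < n"
  shows "summable (\<lambda>k. norm (t ^ k / fact k * (X ^\<^sub>m k) $$ (i,j)))"
proof -
  define c where "c = (\<Sum>a<n. \<Sum>b<n. \<bar>X $$ (a,b)\<bar>)"
  have c: "\<bar>X $$ (a,b)\<bar> \<le> c" if "a < n" "b < n" for a b
  proof -
    have "\<bar>X $$ (a,b)\<bar> \<le> (\<Sum>b<n. \<bar>X $$ (a,b)\<bar>)"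
      using that by (intro member_le_sum) auto
    also have "\<dots> \<le> c" unfolding c_def
      using that by (intro member_le_sum[of a "{..<n}" "\<lambda>a. \<Sum>b<n. \<bar>X $$ (a,b)\<bar>"]) (auto intro: sum_nonneg)
    finally show ?thesis .
  qed
  show ?thesis
  proof (rule summable_comparison_test[OF _ summable_exp[of "\<bar>t\<bar> * (real n * c)"]])
    show "\<exists>N. \<forall>k\<ge>N. norm (norm (t ^ k / fact k * (X ^\<^sub>m k) $$ (i,j))) \<le> inverse (fact k) * (\<bar>t\<bar> * (real n * c)) ^ k"
    proof (intro exI allI impI)
      fix k :: nat
      have b: "\<bar>(X ^\<^sub>m k) $$ (i,j)\<bar> \<le> (real n * c) ^ k" using pow_entry_bound[OF X(1) c] X by auto
      have "norm (norm (t ^ k / fact k * (X ^\<^sub>m k) $$ (i,j))) = \<bar>t\<bar>^k / fact k * \<bar>(X ^\<^sub>m k) $$ (i,j)\<bar>"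
        by (simp add: abs_mult power_abs)
      also have "\<dots> \<le> \<bar>t\<bar>^k / fact k * (real n * c) ^ k"
        by (rule mult_left_mono[OF b]) auto
      also have "\<dots> = inverse (fact k) * (\<bar>t\<bar> * (real n * c)) ^ k"
        by (simp add: power_mult_distrib divide_inverse)
      finally show "norm (norm (t ^ k / fact k * (X ^\<^sub>m k) $$ (i,j))) \<le> inverse (fact k) * (\<bar>t\<bar> * (real n * c)) ^ k" .
    qed
  qed
qed




lemma pascal_sum:
  fixes f :: "nat \<Rightarrow> real"
  shows "(\<Sum>k\<le>m. real (m choose k) * (f (Suc k) + f k)) = (\<Sum>k\<le>Suc m. real (Suc m choose k) * f k)"
proof -
  have 1: "(\<Sum>k\<le>Suc m. real (Suc m choose k) * f k) = f 0 + (\<Sum>k\<le>m. real (m choose k) * f (Suc k)) + (\<Sum>k\<le>m. real (m choose Suc k) * f (Suc k))"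
    by (subst sum.atMost_Suc_shift) (simp add: sum.distrib algebra_simps)
  have 2: "(\<Sum>k\<le>m. real (m choose Suc k) * f (Suc k)) = (\<Sum>k<m. real (m choose Suc k) * f (Suc k))"
    by (simp add: lessThan_Suc_atMost[symmetric])
  have 3: "f 0 + (\<Sum>k<m. real (m choose Suc k) * f (Suc k)) = (\<Sum>k\<le>m. real (m choose k) * f k)"
    by (simp only: lessThan_Suc_atMost[symmetric] sum.lessThan_Suc_shift) simp
  show ?thesis using 1 2 3 by (simp add: sum.distrib algebra_simps)
qed

lemma binom_entry:
  fixes X Y :: "real mat"
  assumes X: "X \<in> carrier_mat n n" and Y: "Y \<in> carrier_mat n n" and c: "X * Y = Y * X"
  shows "i < n \<Longrightarrow> j < n \<Longrightarrow> ((X + Y) ^\<^sub>m m) $$ (i,j) = (\<Sum>k\<le>m. real (m choose k) * (X ^\<^sub>m k * Y ^\<^sub>m (m - k)) $$ (i,j))"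
proof (induction m arbitrary: i j)
  case 0 then show ?case using X Y by simp
next
  case (Suc m)
  have XY: "X + Y \<in> carrier_mat n n" using X Y by simp
  let ?T = "\<lambda>k. X ^\<^sub>m k * Y ^\<^sub>m (m - k)"
  have T: "?T k \<in> carrier_mat n n" for k using mult_carrier_mat[OF pow_carrier_mat[OF X] pow_carrier_mat[OF Y]] .
  have "((X + Y) ^\<^sub>m Suc m) $$ (i,j) = (\<Sum>l<n. ((X + Y) ^\<^sub>m m) $$ (i,l) * (X + Y) $$ (l,j))"
    using mult_entry[OF pow_carrier_mat[OF XY] XY Suc.prems, of m] by simp
  also have "\<dots> = (\<Sum>l<n. (\<Sum>k\<le>m. real (m choose k) * ?T k $$ (i,l)) * (X $$ (l,j) + Y $$ (l,j)))"
    using Suc X Y by (intro sum.cong) auto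
  also have "\<dots> = (\<Sum>k\<le>m. real (m choose k) * ((\<Sum>l<n. ?T k $$ (i,l) * X $$ (l,j)) + (\<Sum>l<n. ?T k $$ (i,l) * Y $$ (l,j))))"
    by (simp add: sum_distrib_right sum_distrib_left sum.distrib algebra_simps sum.swap[of _ "{..<n}"])
  also have "\<dots> = (\<Sum>k\<le>m. real (m choose k) * ((?T k * X) $$ (i,j) + (?T k * Y) $$ (i,j)))"
    using mult_entry[OF T X Suc.prems] mult_entry[OF T Y Suc.prems] by simp
  also have "\<dots> = (\<Sum>k\<le>m. real (m choose k) * ((X ^\<^sub>m Suc k * Y ^\<^sub>m (Suc m - Suc k)) $$ (i,j) + (X ^\<^sub>m k * Y ^\<^sub>m (Suc m - k)) $$ (i,j)))"
  proof (intro sum.cong refl)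
    fix k assume k: "k \<in> {..m}"
    have Xk: "X ^\<^sub>m k \<in> carrier_mat n n" and Yk: "Y ^\<^sub>m (m - k) \<in> carrier_mat n n" using X Y by auto
    have 1: "?T k * X = X ^\<^sub>m Suc k * Y ^\<^sub>m (Suc m - Suc k)"
    proof -
      have "?T k * X = X ^\<^sub>m k * (Y ^\<^sub>m (m - k) * X)" using assoc_mult_mat[OF Xk Yk X] .
      also have "\<dots> = X ^\<^sub>m k * (X * Y ^\<^sub>m (m - k))" using pow_commute[OF X Y c] by simp
      also have "\<dots> = X ^\<^sub>m Suc k * Y ^\<^sub>m (Suc m - Suc k)" using assoc_mult_mat[OF Xk X Yk] by simp
      finally show ?thesis .
    qed
    have 2: "?T k * Y = X ^\<^sub>m k * Y ^\<^sub>m (Suc m - k)"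
      using assoc_mult_mat[OF Xk Yk Y] k by (simp add: Suc_diff_le)
    show "real (m choose k) * ((?T k * X) $$ (i,j) + (?T k * Y) $$ (i,j)) = real (m choose k) * ((X ^\<^sub>m Suc k * Y ^\<^sub>m (Suc m - Suc k)) $$ (i,j) + (X ^\<^sub>m k * Y ^\<^sub>m (Suc m - k)) $$ (i,j))"
      using 1 2 by simp
  qed
  also have "\<dots> = (\<Sum>k\<le>Suc m. real (Suc m choose k) * (X ^\<^sub>m k * Y ^\<^sub>m (Suc m - k)) $$ (i,j))"
    by (rule pascal_sum[where f = "\<lambda>k. (X ^\<^sub>m k * Y ^\<^sub>m (Suc m - k)) $$ (i,j)"])
  finally show ?case .
qed




lemma mat_exp_entry:
  assumes "X \<in> carrier_mat n n" "i < n" "j < n"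
  shows "mat_exp t X $$ (i,j) = (\<Sum>k. t ^ k / fact k * (X ^\<^sub>m k) $$ (i,j))"
  using assms unfolding mat_exp_def by simp

lemma mat_exp_carrier[simp]:
  assumes "X \<in> carrier_mat n n" shows "mat_exp t X \<in> carrier_mat n n"
  using assms unfolding mat_exp_def by simp

lemma coeff_id:
  assumes "k \<le> N"
  shows "t ^ k / fact k * (t ^ (N - k) / fact (N - k)) = t ^ N / fact N * real (N choose k)"
proof -
  have "real (N choose k) = fact N / (fact k * fact (N - k))" using binomial_fact[OF assms] by simp
  moreover have "t ^ N = t ^ k * t ^ (N - k)" using assms by (simp add: power_add[symmetric])
  ultimately show ?thesis by (simp add: field_simps)
qed

lemma mat_exp_mult:
  fixes X Y :: "real mat"
  assumes X: "X \<in> carrier_mat n n" and Y: "Y \<in> carrier_mat n n" and c: "X * Y = Y * X"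
  shows "mat_exp t X * mat_exp t Y = mat_exp t (X + Y)"
proof (rule eq_matI)
  show "dim_row (mat_exp t X * mat_exp t Y) = dim_row (mat_exp t (X + Y))"
    using X Y by (simp add: mat_exp_def)
  show "dim_col (mat_exp t X * mat_exp t Y) = dim_col (mat_exp t (X + Y))"
    using X Y by (simp add: mat_exp_def)
  fix i j assume "i < dim_row (mat_exp t (X + Y))" "j < dim_col (mat_exp t (X + Y))"
  then have i: "i < n" and j: "j < n" using X Y by (auto simp: mat_exp_def)
  define a where "a = (\<lambda>l k. t ^ k / fact k * (X ^\<^sub>m k) $$ (i,l))"
  define b where "b = (\<lambda>l k. t ^ k / fact k * (Y ^\<^sub>m k) $$ (l,j))"
  have sa: "summable (\<lambda>k. norm (a l k))" if "l < n" for l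
    unfolding a_def using exp_summable_entry[OF X i that] .
  have sb: "summable (\<lambda>k. norm (b l k))" if "l < n" for l
    unfolding b_def using exp_summable_entry[OF Y that j] .
  have "(mat_exp t X * mat_exp t Y) $$ (i,j) = (\<Sum>l<n. (\<Sum>k. a l k) * (\<Sum>k. b l k))"
    using mult_entry[OF mat_exp_carrier[OF X] mat_exp_carrier[OF Y] i j]
      mat_exp_entry[OF X i] mat_exp_entry[OF Y _ j] unfolding a_def b_def by simp
  also have "\<dots> = (\<Sum>l<n. \<Sum>N. \<Sum>k\<le>N. a l k * b l (N - k))"
    using Cauchy_product[OF sa sb] by simp
  also have "\<dots> = (\<Sum>N. \<Sum>l<n. \<Sum>k\<le>N. a l k * b l (N - k))"
    by (rule suminf_sum[symmetric]) (use summable_Cauchy_product[OF sa sb] in simp)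
  also have "\<dots> = (\<Sum>N. t ^ N / fact N * ((X + Y) ^\<^sub>m N) $$ (i,j))"
  proof (rule arg_cong[where f = suminf], rule ext)
    fix N
    have "(\<Sum>l<n. \<Sum>k\<le>N. a l k * b l (N - k)) = (\<Sum>k\<le>N. \<Sum>l<n. a l k * b l (N - k))"
      by (rule sum.swap)
    also have "\<dots> = (\<Sum>k\<le>N. t ^ N / fact N * (real (N choose k) * (X ^\<^sub>m k * Y ^\<^sub>m (N - k)) $$ (i,j)))"
    proof (rule sum.cong[OF refl])
      fix k assume k: "k \<in> {..N}"
      have "(\<Sum>l<n. a l k * b l (N - k)) = (t ^ k / fact k * (t ^ (N - k) / fact (N - k))) * (\<Sum>l<n. (X ^\<^sub>m k) $$ (i,l) * (Y ^\<^sub>m (N - k)) $$ (l,j))"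
        unfolding a_def b_def by (simp add: sum_distrib_left algebra_simps)
      also have "\<dots> = t ^ N / fact N * (real (N choose k) * (X ^\<^sub>m k * Y ^\<^sub>m (N - k)) $$ (i,j))"
        using coeff_id[of k N t] k mult_entry[OF pow_carrier_mat[OF X] pow_carrier_mat[OF Y] i j] by simp
      finally show "(\<Sum>l<n. a l k * b l (N - k)) = t ^ N / fact N * (real (N choose k) * (X ^\<^sub>m k * Y ^\<^sub>m (N - k)) $$ (i,j))" .
    qed
    also have "\<dots> = t ^ N / fact N * ((X + Y) ^\<^sub>m N) $$ (i,j)"
      using binom_entry[OF X Y c i j, of N] by (simp add: sum_distrib_left)
    finally show "(\<Sum>l<n. \<Sum>k\<le>N. a l k * b l (N - k)) = t ^ N / fact N * ((X + Y) ^\<^sub>m N) $$ (i,j)" .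
  qed
  also have "\<dots> = mat_exp t (X + Y) $$ (i,j)"
    using mat_exp_entry[of "X + Y" n, OF _ i j] X Y by simp
  finally show "(mat_exp t X * mat_exp t Y) $$ (i,j) = mat_exp t (X + Y) $$ (i,j)" .
qed




lemma split_sum: "(\<Sum>i<p+q. f i) = (\<Sum>i<p. f i) + (\<Sum>j<q. f (p + j :: nat))"
  by (induction q) (auto simp: add.assoc)

lemma smult_one_pow:
  assumes "i < n" "j < n"
  shows "((d \<cdot>\<^sub>m (1\<^sub>m n :: real mat)) ^\<^sub>m k) $$ (i,j) = (if i = j then d ^ k else 0)"
  using assms
proof (induction k arbitrary: i j)
  case 0 then show ?case by simp
next
  case (Suc k)
  have C: "d \<cdot>\<^sub>m (1\<^sub>m n :: real mat) \<in> carrier_mat n n" by simp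
  have "((d \<cdot>\<^sub>m (1\<^sub>m n :: real mat)) ^\<^sub>m Suc k) $$ (i,j) = (\<Sum>l<n. ((d \<cdot>\<^sub>m 1\<^sub>m n) ^\<^sub>m k) $$ (i,l) * (d \<cdot>\<^sub>m (1\<^sub>m n :: real mat)) $$ (l,j))"
    using mult_entry[OF pow_carrier_mat[OF C] C Suc.prems, of k] by simp
  also have "\<dots> = (\<Sum>l<n. (if i = l then d ^ k else 0) * (if l = j then d else 0))"
    using Suc by (intro sum.cong) auto
  also have "\<dots> = (\<Sum>l<n. if l = i then d ^ k * (if i = j then d else 0) else 0)"
    by (intro sum.cong) auto
  also have "\<dots> = (if i = j then d ^ Suc k else 0)"
    using Suc.prems by simp
  finally show ?case .
qed

lemma exp_series_real: "(\<Sum>k. t ^ k / fact k * d ^ k) = exp (t * d :: real)"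
proof -
  have "(\<lambda>k. (t*d) ^ k /\<^sub>R fact k) sums exp (t*d)" by (rule exp_converges)
  then have "(\<lambda>k. t ^ k / fact k * d ^ k) sums exp (t*d)"
    by (simp add: power_mult_distrib divide_inverse algebra_simps)
  then show ?thesis by (rule sums_unique[symmetric])
qed

lemma mat_exp_scalar:
  "mat_exp t (d \<cdot>\<^sub>m (1\<^sub>m n :: real mat)) = exp (t * d) \<cdot>\<^sub>m 1\<^sub>m n"
proof (rule eq_matI)
  fix i j assume "i < dim_row (exp (t * d) \<cdot>\<^sub>m (1\<^sub>m n :: real mat))" "j < dim_col (exp (t * d) \<cdot>\<^sub>m (1\<^sub>m n :: real mat))"
  then have i: "i < n" and j: "j < n" by auto
  have "mat_exp t (d \<cdot>\<^sub>m (1\<^sub>m n :: real mat)) $$ (i,j) = (\<Sum>k. t ^ k / fact k * (if i = j then d ^ k else 0))"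
    using mat_exp_entry[of "d \<cdot>\<^sub>m (1\<^sub>m n :: real mat)" n i j t] i j smult_one_pow[OF i j] by simp
  also have "\<dots> = (if i = j then exp (t * d) else 0)"
    using exp_series_real by (cases "i = j") auto
  finally show "mat_exp t (d \<cdot>\<^sub>m (1\<^sub>m n :: real mat)) $$ (i,j) = (exp (t * d) \<cdot>\<^sub>m 1\<^sub>m n) $$ (i,j)"
    using i j by simp
qed (auto simp: mat_exp_def)

lemma transpose_pow:
  fixes X :: "real mat"
  assumes X: "X \<in> carrier_mat n n"
  shows "transpose_mat (X ^\<^sub>m k) = (transpose_mat X) ^\<^sub>m k"
proof (induction k)
  case 0 then show ?case using X by simp
next
  case (Suc k)
  have XT: "transpose_mat X \<in> carrier_mat n n" using X by simp
  have "transpose_mat (X ^\<^sub>m Suc k) = transpose_mat X * transpose_mat (X ^\<^sub>m k)"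
    using transpose_mult[OF pow_carrier_mat[OF X] X] by simp
  also have "\<dots> = transpose_mat X * (transpose_mat X) ^\<^sub>m k" using Suc by simp
  also have "\<dots> = (transpose_mat X) ^\<^sub>m Suc k"
    using pow_commute[OF XT XT refl, of k] by simp
  finally show ?case .
qed

lemma mat_exp_transpose:
  fixes X :: "real mat"
  assumes X: "X \<in> carrier_mat n n"
  shows "transpose_mat (mat_exp t X) = mat_exp t (transpose_mat X)"
proof (rule eq_matI)
  fix i j assume "i < dim_row (mat_exp t (transpose_mat X))" "j < dim_col (mat_exp t (transpose_mat X))"
  then have i: "i < n" and j: "j < n" using X by (auto simp: mat_exp_def)
  have XT: "transpose_mat X \<in> carrier_mat n n" using X by simp
  have "transpose_mat (mat_exp t X) $$ (i,j) = mat_exp t X $$ (j,i)"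
    using i j X by (simp add: mat_exp_def)
  also have "\<dots> = (\<Sum>k. t ^ k / fact k * (X ^\<^sub>m k) $$ (j,i))" by (rule mat_exp_entry[OF X j i])
  also have "\<dots> = (\<Sum>k. t ^ k / fact k * ((transpose_mat X) ^\<^sub>m k) $$ (i,j))"
  proof -
    have "(X ^\<^sub>m k) $$ (j,i) = ((transpose_mat X) ^\<^sub>m k) $$ (i,j)" for k
    proof -
      have "(X ^\<^sub>m k) $$ (j,i) = transpose_mat (X ^\<^sub>m k) $$ (i,j)"
        using i j X by simp
      then show ?thesis using transpose_pow[OF X] by simp
    qed
    then show ?thesis by simp
  qed
  also have "\<dots> = mat_exp t (transpose_mat X) $$ (i,j)" by (rule mat_exp_entry[OF XT i j, symmetric])
  finally show "transpose_mat (mat_exp t X) $$ (i,j) = mat_exp t (transpose_mat X) $$ (i,j)" .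
qed (use X in \<open>auto simp: mat_exp_def\<close>)




definition good :: "nat \<Rightarrow> nat \<Rightarrow> real \<Rightarrow> real mat \<Rightarrow> bool" where
  "good p q a A \<longleftrightarrow> A \<in> carrier_mat (p+q) (p+q) \<and>
     (\<forall>k<p. \<forall>c<p+q. A $$ (k,c) = (if c = k then a else 0)) \<and>
     (\<forall>i<p+q. \<forall>j<p+q. A $$ (i,j) + A $$ (j,i) = (if i = j then 2 * a else 0))"

lemma good_pow_row:
  assumes g: "good p q a A" and k: "k < p" and c: "c < p + q"
  shows "(A ^\<^sub>m m) $$ (k,c) = (if c = k then a ^ m else 0)"
  using c
proof (induction m arbitrary: c)
  case 0 then show ?case using k g unfolding good_def by auto
next
  case (Suc m)
  have A: "A \<in> carrier_mat (p+q) (p+q)" using g unfolding good_def by auto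
  have kn: "k < p + q" using k by simp
  have "(A ^\<^sub>m Suc m) $$ (k,c) = (\<Sum>l<p+q. (A ^\<^sub>m m) $$ (k,l) * A $$ (l,c))"
    using mult_entry[OF pow_carrier_mat[OF A] A kn Suc.prems, of m] by simp
  also have "\<dots> = (\<Sum>l<p+q. if l = k then a ^ m * A $$ (k,c) else 0)"
    using Suc.IH by (intro sum.cong) auto
  also have "\<dots> = a ^ m * A $$ (k,c)" using kn by simp
  also have "\<dots> = (if c = k then a ^ Suc m else 0)"
    using g k Suc.prems unfolding good_def by auto
  finally show ?case .
qed

lemma good_exp_row:
  assumes g: "good p q a A" and k: "k < p" and c: "c < p + q"
  shows "mat_exp t A $$ (k,c) = (if c = k then exp (t * a) else 0)"
proof -
  have A: "A \<in> carrier_mat (p+q) (p+q)" using g unfolding good_def by auto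
  have "mat_exp t A $$ (k,c) = (\<Sum>m. t ^ m / fact m * (if c = k then a ^ m else 0))"
    using mat_exp_entry[OF A _ c, of k t] k good_pow_row[OF g k c] by simp
  also have "\<dots> = (if c = k then exp (t * a) else 0)"
    using exp_series_real by (cases "c = k") auto
  finally show ?thesis .
qed

lemma good_sym:
  assumes g: "good p q a A" and "i < p+q" "j < p+q"
  shows "A $$ (j,i) = (if i = j then 2 * a else 0) - A $$ (i,j)"
  using g assms unfolding good_def by (auto simp: algebra_simps)

lemma good_commute:
  assumes g: "good p q a A"
  shows "A * transpose_mat A = transpose_mat A * A"
proof -
  have A: "A \<in> carrier_mat (p+q) (p+q)" using g unfolding good_def by auto
  have AT: "transpose_mat A \<in> carrier_mat (p+q) (p+q)" using A by simp
  show ?thesis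
  proof (rule eq_matI)
    fix i j assume "i < dim_row (transpose_mat A * A)" "j < dim_col (transpose_mat A * A)"
    then have i: "i < p+q" and j: "j < p+q" using A by auto
    have "(A * transpose_mat A) $$ (i,j) = (\<Sum>l<p+q. A $$ (i,l) * A $$ (j,l))"
      using mult_entry[OF A AT i j] i j A by simp
    also have "\<dots> = (\<Sum>l<p+q. A $$ (i,l) * ((if l = j then 2 * a else 0) - A $$ (l,j)))"
    proof (intro sum.cong refl)
      fix l assume "l \<in> {..<p+q}"
      then show "A $$ (i,l) * A $$ (j,l) = A $$ (i,l) * ((if l = j then 2 * a else 0) - A $$ (l,j))"
        using good_sym[OF g, of l j] j by simp
    qed
    also have "\<dots> = (\<Sum>l<p+q. ((if l = i then 2 * a else 0) - A $$ (i,l)) * A $$ (l,j))"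
    proof -
      have e1: "(\<Sum>l<p+q. A $$ (i,l) * ((if l = j then 2 * a else 0) - A $$ (l,j)))
          = (\<Sum>l<p+q. (if l = j then A $$ (i,j) * (2 * a) else 0)) - (\<Sum>l<p+q. A $$ (i,l) * A $$ (l,j))"
        unfolding sum_subtractf[symmetric] by (intro sum.cong) (auto simp: right_diff_distrib)
      have e2: "(\<Sum>l<p+q. ((if l = i then 2 * a else 0) - A $$ (i,l)) * A $$ (l,j))
          = (\<Sum>l<p+q. (if l = i then 2 * a * A $$ (i,j) else 0)) - (\<Sum>l<p+q. A $$ (i,l) * A $$ (l,j))"
        unfolding sum_subtractf[symmetric] by (intro sum.cong) (auto simp: left_diff_distrib)
      have e3: "(\<Sum>l<p+q. (if l = j then A $$ (i,j) * (2 * a) else 0)) = A $$ (i,j) * (2 * a)"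
        using j by simp
      have e4: "(\<Sum>l<p+q. (if l = i then 2 * a * A $$ (i,j) else 0)) = A $$ (i,j) * (2 * a)"
        using i by simp
      show ?thesis using e1 e2 e3 e4 by simp
    qed
    also have "\<dots> = (\<Sum>l<p+q. A $$ (l,i) * A $$ (l,j))"
    proof (intro sum.cong refl)
      fix l assume "l \<in> {..<p+q}"
      then show "((if l = i then 2 * a else 0) - A $$ (i,l)) * A $$ (l,j) = A $$ (l,i) * A $$ (l,j)"
        using good_sym[OF g, of i l] i by simp
    qed
    also have "\<dots> = (transpose_mat A * A) $$ (i,j)"
      using mult_entry[OF AT A i j] i j A by simp
    finally show "(A * transpose_mat A) $$ (i,j) = (transpose_mat A * A) $$ (i,j)" .
  qed (use A in auto)
qed

lemma good_BTB:
  assumes g: "good p q a A"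
  shows "transpose_mat (mat_exp t A) * mat_exp t A = exp (t * (2 * a)) \<cdot>\<^sub>m 1\<^sub>m (p+q)"
proof -
  have A: "A \<in> carrier_mat (p+q) (p+q)" using g unfolding good_def by auto
  have AT: "transpose_mat A \<in> carrier_mat (p+q) (p+q)" using A by simp
  have "transpose_mat (mat_exp t A) * mat_exp t A = mat_exp t (transpose_mat A) * mat_exp t A"
    using mat_exp_transpose[OF A] by simp
  also have "\<dots> = mat_exp t (transpose_mat A + A)"
    using mat_exp_mult[OF AT A] good_commute[OF g] by simp
  also have "transpose_mat A + A = (2 * a) \<cdot>\<^sub>m 1\<^sub>m (p+q)"
  proof (rule eq_matI)
    fix i j assume "i < dim_row ((2 * a) \<cdot>\<^sub>m (1\<^sub>m (p+q) :: real mat))" "j < dim_col ((2 * a) \<cdot>\<^sub>m (1\<^sub>m (p+q) :: real mat))"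
    then have i: "i < p+q" and j: "j < p+q" by auto
    show "(transpose_mat A + A) $$ (i,j) = ((2 * a) \<cdot>\<^sub>m 1\<^sub>m (p+q)) $$ (i,j)"
      using good_sym[OF g i j] i j A by auto
  qed (use A in auto)
  also have "mat_exp t ((2 * a) \<cdot>\<^sub>m 1\<^sub>m (p+q)) = exp (t * (2 * a)) \<cdot>\<^sub>m 1\<^sub>m (p+q)"
    by (rule mat_exp_scalar)
  finally show ?thesis .
qed




lemma smult_one_mult_vec:
  fixes v :: "real vec"
  assumes "v \<in> carrier_vec n"
  shows "(c \<cdot>\<^sub>m 1\<^sub>m n) *\<^sub>v v = c \<cdot>\<^sub>v v"
proof (rule eq_vecI)
  fix i assume "i < dim_vec (c \<cdot>\<^sub>v v)"
  then have i: "i < n" using assms by simp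
  have "((c \<cdot>\<^sub>m 1\<^sub>m n) *\<^sub>v v) $ i = (\<Sum>l\<in>{0..<n}. c * (if l = i then 1 else 0) * v $ l)"
    using i assms by (simp add: scalar_prod_def)
  also have "\<dots> = (\<Sum>l\<in>{0..<n}. if l = i then c * v $ i else 0)"
    by (intro sum.cong) auto
  also have "\<dots> = c * v $ i" using i by simp
  finally show "((c \<cdot>\<^sub>m 1\<^sub>m n) *\<^sub>v v) $ i = (c \<cdot>\<^sub>v v) $ i" using i assms by simp
qed (use assms in auto)

lemma good_norm:
  assumes g: "good p q a A" and v: "v \<in> carrier_vec (p+q)"
  shows "(mat_exp t A *\<^sub>v v) \<bullet> (mat_exp t A *\<^sub>v v) = exp (t * (2 * a)) * (v \<bullet> v)"
proof -
  have A: "A \<in> carrier_mat (p+q) (p+q)" using g unfolding good_def by auto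
  define B where "B = mat_exp t A"
  have B: "B \<in> carrier_mat (p+q) (p+q)" unfolding B_def using A by simp
  have Bv: "B *\<^sub>v v \<in> carrier_vec (p+q)" using B v by simp
  have "(B *\<^sub>v v) \<bullet> (B *\<^sub>v v) = (transpose_mat B *\<^sub>v (B *\<^sub>v v)) \<bullet> v"
    using transpose_vec_mult_scalar[OF B v Bv] by simp
  also have "transpose_mat B *\<^sub>v (B *\<^sub>v v) = (transpose_mat B * B) *\<^sub>v v"
    using assoc_mult_mat_vec[OF _ B v, of "transpose_mat B"] B by simp
  also have "transpose_mat B * B = exp (t * (2 * a)) \<cdot>\<^sub>m 1\<^sub>m (p+q)"
    unfolding B_def by (rule good_BTB[OF g])
  also have "(exp (t * (2 * a)) \<cdot>\<^sub>m 1\<^sub>m (p+q)) *\<^sub>v v = exp (t * (2 * a)) \<cdot>\<^sub>v v"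
    by (rule smult_one_mult_vec[OF v])
  also have "(exp (t * (2 * a)) \<cdot>\<^sub>v v) \<bullet> v = exp (t * (2 * a)) * (v \<bullet> v)"
    using v by simp
  finally show ?thesis unfolding B_def .
qed

lemma good_pos:
  assumes g: "good p q a A" and v: "v \<in> M_cone p q"
  shows "mat_exp t A *\<^sub>v v \<in> M_cone p q"
proof -
  have A: "A \<in> carrier_mat (p+q) (p+q)" using g unfolding good_def by auto
  define B where "B = mat_exp t A"
  define w where "w = B *\<^sub>v v"
  define E where "E = exp (t * a)"
  have E0: "E > 0" unfolding E_def by simp
  have E2: "exp (t * (2 * a)) = E ^ 2" unfolding E_def
    by (simp add: power2_eq_square exp_add[symmetric] algebra_simps)
  have vc: "v \<in> carrier_vec (p+q)" using v unfolding M_cone_def by auto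
  have B: "B \<in> carrier_mat (p+q) (p+q)" unfolding B_def using A by simp
  have wc: "w \<in> carrier_vec (p+q)" unfolding w_def using B vc by simp
  have wk: "w $ k = E * v $ k" if k: "k < p" for k
  proof -
    have "w $ k = (\<Sum>c\<in>{0..<p+q}. B $$ (k,c) * v $ c)"
      unfolding w_def using B vc k by (simp add: scalar_prod_def)
    also have "\<dots> = (\<Sum>c\<in>{0..<p+q}. if c = k then E * v $ k else 0)"
      unfolding B_def E_def using good_exp_row[OF g k] by (intro sum.cong) auto
    also have "\<dots> = E * v $ k" using k by simp
    finally show ?thesis .
  qed
  have tot: "(\<Sum>i<p+q. (w $ i)^2) = E^2 * (\<Sum>i<p+q. (v $ i)^2)"
  proof -
    have 1: "w \<bullet> w = E^2 * (v \<bullet> v)" using good_norm[OF g vc, of t] E2 unfolding w_def B_def by simp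
    have 2: "w \<bullet> w = (\<Sum>i<p+q. (w $ i)^2)" using wc by (simp add: scalar_prod_def atLeast0LessThan power2_eq_square)
    have 3: "v \<bullet> v = (\<Sum>i<p+q. (v $ i)^2)" using vc by (simp add: scalar_prod_def atLeast0LessThan power2_eq_square)
    show ?thesis using 1 2 3 by simp
  qed
  have first: "(\<Sum>i<p. (w $ i)^2) = E^2 * (\<Sum>i<p. (v $ i)^2)"
    using wk by (simp add: sum_distrib_left power_mult_distrib)
  have second: "(\<Sum>j<q. (w $ (p+j))^2) = E^2 * (\<Sum>j<q. (v $ (p+j))^2)"
    using tot first unfolding split_sum by (simp add: algebra_simps)
  have un: "unorm p q w = E * unorm p q v"
    unfolding unorm_def second using E0 by (simp add: real_sqrt_mult)
  have sumw: "(\<Sum>i<p. w $ i) = E * (\<Sum>i<p. v $ i)"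
    using wk by (simp add: sum_distrib_left)
  have "(\<Sum>i<p. v $ i) \<ge> unorm p q v" and nn: "\<forall>i<p. v $ i \<ge> 0" using v unfolding M_cone_def by auto
  then have "(\<Sum>i<p. w $ i) \<ge> unorm p q w" unfolding sumw un using E0 by simp
  moreover have "\<forall>i<p. w $ i \<ge> 0" using wk nn E0 by simp
  ultimately show ?thesis using wc unfolding M_cone_def w_def B_def by simp
qed




definition mk :: "nat \<Rightarrow> nat \<Rightarrow> (nat \<Rightarrow> real) \<Rightarrow> (nat \<Rightarrow> real) \<Rightarrow> real vec" where
  "mk p q f g = vec (p+q) (\<lambda>i. if i < p then f i else g (i - p))"

lemma mk_carrier[simp]: "mk p q f g \<in> carrier_vec (p+q)" and mk_dim[simp]: "dim_vec (mk p q f g) = p+q"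
  unfolding mk_def by auto

lemma mk_lo[simp]: "i < p \<Longrightarrow> mk p q f g $ i = f i"
  unfolding mk_def by simp

lemma mk_hi[simp]: "j < q \<Longrightarrow> mk p q f g $ (p + j) = g j"
  unfolding mk_def by simp

lemma unorm_mk: "unorm p q (mk p q f g) = sqrt (\<Sum>j<q. (g j)^2)"
  unfolding unorm_def by simp

lemma M_mk: "mk p q f g \<in> M_cone p q \<longleftrightarrow> (\<Sum>i<p. f i) \<ge> sqrt (\<Sum>j<q. (g j)^2) \<and> (\<forall>i<p. f i \<ge> 0)"
  unfolding M_cone_def by (simp add: unorm_mk)

lemma sp_split:
  assumes "v \<in> carrier_vec (p+q)" "w \<in> carrier_vec (p+q)"
  shows "v \<bullet> w = (\<Sum>i<p. v $ i * w $ i) + (\<Sum>j<q. v $ (p+j) * w $ (p+j))"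
  using assms by (simp add: scalar_prod_def atLeast0LessThan split_sum)

lemma Axe:
  assumes A: "A \<in> carrier_mat (p+q) (p+q)" and r: "r < p+q"
  shows "(A *\<^sub>v mk p q f g) $ r = (\<Sum>c<p. A $$ (r,c) * f c) + (\<Sum>m<q. A $$ (r,p+m) * g m)"
proof -
  have "(A *\<^sub>v mk p q f g) $ r = row A r \<bullet> mk p q f g" using A r by simp
  also have "\<dots> = (\<Sum>c<p. A $$ (r,c) * f c) + (\<Sum>m<q. A $$ (r,p+m) * g m)"
    using A r by (subst sp_split[of _ p q]) auto
  finally show ?thesis .
qed

lemma cs_lower:
  fixes a b :: "nat \<Rightarrow> real"
  assumes S: "finite S"
  shows "(\<Sum>j\<in>S. a j * b j) \<ge> - (sqrt (\<Sum>j\<in>S. (a j)^2) * sqrt (\<Sum>j\<in>S. (b j)^2))"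
proof -
  define A where "A = sqrt (\<Sum>j\<in>S. (a j)^2)"
  define B where "B = sqrt (\<Sum>j\<in>S. (b j)^2)"
  have A2: "A^2 = (\<Sum>j\<in>S. (a j)^2)" unfolding A_def by (simp add: sum_nonneg)
  have B2: "B^2 = (\<Sum>j\<in>S. (b j)^2)" unfolding B_def by (simp add: sum_nonneg)
  have A0: "A \<ge> 0" and B0: "B \<ge> 0" unfolding A_def B_def by (auto simp: sum_nonneg)
  have "- (A * B) \<le> (\<Sum>j\<in>S. a j * b j)"
  proof (cases "A = 0 \<or> B = 0")
    case True
    then have "(\<Sum>j\<in>S. (a j)^2) = 0 \<or> (\<Sum>j\<in>S. (b j)^2) = 0"
      using A2 B2 by auto
    then have "(\<forall>j\<in>S. a j = 0) \<or> (\<forall>j\<in>S. b j = 0)"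
      using S by (simp add: sum_nonneg_eq_0_iff)
    then have "(\<Sum>j\<in>S. a j * b j) = 0" by auto
    then show ?thesis using True by auto
  next
    case False
    then have Ap: "A > 0" and Bp: "B > 0" using A0 B0 by auto
    have pt: "- (2 * A * B) * (a j * b j) \<le> B^2 * (a j)^2 + A^2 * (b j)^2" for j
    proof -
      have e: "(B * a j + A * b j)^2 = B^2 * (a j)^2 + A^2 * (b j)^2 + (2 * A * B) * (a j * b j)"
        by (simp add: power2_sum power_mult_distrib mult_ac)
      have "0 \<le> (B * a j + A * b j)^2" by simp
      moreover have "- (2 * A * B) * (a j * b j) = - ((2 * A * B) * (a j * b j))" by simp
      ultimately show ?thesis unfolding e by linarith
    qed
    have s1: "(\<Sum>j\<in>S. - (2 * A * B) * (a j * b j)) \<le> (\<Sum>j\<in>S. B^2 * (a j)^2 + A^2 * (b j)^2)"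
      using pt by (rule sum_mono)
    have s2: "(\<Sum>j\<in>S. - (2 * A * B) * (a j * b j)) = - (2 * A * B) * (\<Sum>j\<in>S. a j * b j)"
      by (rule sum_distrib_left[symmetric])
    have s3: "(\<Sum>j\<in>S. B^2 * (a j)^2 + A^2 * (b j)^2) = B^2 * A^2 + A^2 * B^2"
      unfolding sum.distrib sum_distrib_left[symmetric] A2 B2 ..
    have "(2 * A * B) * (- (A * B)) \<le> (2 * A * B) * (\<Sum>j\<in>S. a j * b j)"
    proof -
      have "(2 * A * B) * (- (A * B)) = - (B^2 * A^2 + A^2 * B^2)" by (simp add: power2_eq_square algebra_simps)
      moreover have "- (2 * A * B) * (\<Sum>j\<in>S. a j * b j) = - ((2 * A * B) * (\<Sum>j\<in>S. a j * b j))" by simp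
      ultimately show ?thesis using s1 s2 s3 by linarith
    qed
    moreover have c: "0 < 2 * A * B" using Ap Bp by simp
    ultimately show ?thesis using mult_le_cancel_left_pos[OF c] by blast
  qed
  then show ?thesis unfolding A_def B_def .
qed

lemma dual_mem:
  assumes s: "s \<in> carrier_vec (p+q)" and y: "\<forall>k<p. s $ k \<ge> unorm p q s"
  shows "s \<in> dual_cone (p+q) (M_cone p q)"
  unfolding dual_cone_def
proof (intro CollectI conjI ballI s)
  fix x assume x: "x \<in> M_cone p q"
  have xc: "x \<in> carrier_vec (p+q)" and xs: "(\<Sum>i<p. x $ i) \<ge> unorm p q x" and xn: "\<forall>i<p. x $ i \<ge> 0"
    using x unfolding M_cone_def by auto
  have N0: "unorm p q s \<ge> 0" unfolding unorm_def by (simp add: sum_nonneg)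
  have "(\<Sum>i<p. x $ i * s $ i) \<ge> (\<Sum>i<p. x $ i * unorm p q s)"
    using xn y by (intro sum_mono mult_left_mono) auto
  moreover have "(\<Sum>i<p. x $ i * unorm p q s) = (\<Sum>i<p. x $ i) * unorm p q s"
    by (simp add: sum_distrib_right)
  moreover have "(\<Sum>i<p. x $ i) * unorm p q s \<ge> unorm p q x * unorm p q s"
    using xs N0 by (rule mult_right_mono)
  moreover have "(\<Sum>j<q. x $ (p+j) * s $ (p+j)) \<ge> - (unorm p q x * unorm p q s)"
    unfolding unorm_def by (rule cs_lower) simp
  ultimately have "(\<Sum>i<p. x $ i * s $ i) + (\<Sum>j<q. x $ (p+j) * s $ (p+j)) \<ge> 0" by linarith
  then show "x \<bullet> s \<ge> 0" using sp_split[OF xc s] by simp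
qed




lemma sum_delta_mult[simp]:
  "finite S \<Longrightarrow> (\<Sum>c\<in>S. F c * (if c = i then 1 else 0)) = (if i \<in> S then F i else (0::real))"
proof -
  assume S: "finite S"
  have "(\<Sum>c\<in>S. F c * (if c = i then 1 else 0)) = (\<Sum>c\<in>S. if c = i then F c else 0)"
    by (rule sum.cong) auto
  then show ?thesis using S by simp
qed

lemma pos_apply:
  assumes "positive_operator A (M_cone p q)" "x \<in> M_cone p q"
  shows "A *\<^sub>v x \<in> M_cone p q"
  using assms unfolding positive_operator_def by auto

lemma M_nonneg: "w \<in> M_cone p q \<Longrightarrow> i < p \<Longrightarrow> w $ i \<ge> 0"
  unfolding M_cone_def by auto

lemma part1:
  assumes A: "A \<in> carrier_mat (p+q) (p+q)" and P: "positive_operator A (M_cone p q)" and i: "i < p"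
  shows "row A i \<in> L_cone p q"
proof -
  define N where "N = unorm p q (row A i)"
  have N: "N = sqrt (\<Sum>j<q. (A $$ (i, p+j))^2)" unfolding N_def unorm_def using A i by simp
  have N0: "N \<ge> 0" unfolding N by (simp add: sum_nonneg)
  have NN: "N^2 = (\<Sum>j<q. (A $$ (i, p+j))^2)" unfolding N by (simp add: sum_nonneg)
  have "row A i $ k \<ge> N" if k: "k < p" for k
  proof -
    define g where "g = (\<lambda>m. if N = 0 then 0 else - A $$ (i, p+m) / N)"
    define x where "x = mk p q (\<lambda>c. if c = k then 1 else 0) g"
    have sg: "(\<Sum>j<q. (g j)^2) = (if N = 0 then 0 else 1)"
    proof (cases "N = 0")
      case False
      have "(\<Sum>j<q. (g j)^2) = (\<Sum>j<q. (A $$ (i, p+j))^2) / N^2"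
        unfolding g_def using False by (simp add: power_divide sum_divide_distrib)
      also have "\<dots> = 1" using False by (simp add: NN[symmetric])
      finally show ?thesis using False by simp
    qed (simp add: g_def)
    have xM: "x \<in> M_cone p q" unfolding x_def M_mk sg using k by auto
    have "(A *\<^sub>v x) $ i \<ge> 0" using M_nonneg[OF pos_apply[OF P xM] i] .
    moreover have "(A *\<^sub>v x) $ i = A $$ (i,k) + (\<Sum>m<q. A $$ (i,p+m) * g m)"
      unfolding x_def using Axe[OF A, of i] i k by simp
    moreover have "(\<Sum>m<q. A $$ (i,p+m) * g m) = - N"
    proof (cases "N = 0")
      case True then show ?thesis unfolding g_def by simp
    next
      case False
      have "(\<Sum>m<q. A $$ (i,p+m) * g m) = - (\<Sum>m<q. (A $$ (i,p+m))^2) / N"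
        unfolding g_def using False
        by (simp add: sum_divide_distrib sum_negf power2_eq_square)
      also have "\<dots> = - (N * N) / N" using NN by (simp add: power2_eq_square)
      also have "\<dots> = - N" using False by simp
      finally show ?thesis .
    qed
    ultimately show ?thesis using A i k by simp
  qed
  moreover have "row A i \<in> carrier_vec (p+q)" using row_carrier_vec[OF _ A, of i] i by simp
  ultimately show ?thesis unfolding L_cone_def N_def by blast
qed

lemma part2:
  assumes A: "A \<in> carrier_mat (p+q) (p+q)" and P: "positive_operator A (M_cone p q)" and i: "i < p"
    and g: "sqrt (\<Sum>j<q. (g j)^2) \<le> 1"
  shows "A *\<^sub>v mk p q (\<lambda>c. if c = i then 1 else 0) g \<in> M_cone p q"
  by (rule pos_apply[OF P]) (use i g in \<open>simp add: M_mk\<close>)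

lemma col_as:
  assumes A: "A \<in> carrier_mat (p+q) (p+q)" and i: "i < p"
  shows "vec (p+q) (\<lambda>k. col A i $ k + (\<Sum>j<q. g j * col A (p + j) $ k)) = A *\<^sub>v mk p q (\<lambda>c. if c = i then 1 else 0) g"
proof (rule eq_vecI)
  fix k assume "k < dim_vec (A *\<^sub>v mk p q (\<lambda>c. if c = i then 1 else 0) g)"
  then have k: "k < p+q" using A by simp
  show "vec (p+q) (\<lambda>k. col A i $ k + (\<Sum>j<q. g j * col A (p + j) $ k)) $ k = (A *\<^sub>v mk p q (\<lambda>c. if c = i then 1 else 0) g) $ k"
  proof -
    have "(\<Sum>j<q. g j * col A (p + j) $ k) = (\<Sum>m<q. A $$ (k,p+m) * g m)"
      using A k by (intro sum.cong) auto
    then show ?thesis using Axe[OF A k] A k i by simp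
  qed
qed (use A in simp)




lemma sum_delta_multR[simp]:
  "finite S \<Longrightarrow> (\<Sum>c\<in>S. F c * (if c = i then \<alpha> else 0)) = (if i \<in> S then F i * \<alpha> else (0::real))"
proof -
  assume S: "finite S"
  have "(\<Sum>c\<in>S. F c * (if c = i then \<alpha> else 0)) = (\<Sum>c\<in>S. if c = i then F c * \<alpha> else 0)"
    by (rule sum.cong) auto
  then show ?thesis using S by simp
qed

lemma sum_delta_multL[simp]:
  "finite S \<Longrightarrow> (\<Sum>c\<in>S. (if c = i then \<alpha> else 0) * F c) = (if i \<in> S then \<alpha> * F i else (0::real))"
proof -
  assume S: "finite S"
  have "(\<Sum>c\<in>S. (if c = i then \<alpha> else 0) * F c) = (\<Sum>c\<in>S. if c = i then \<alpha> * F c else 0)"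
    by (rule sum.cong) auto
  then show ?thesis using S by simp
qed

lemma sum_delta_sq[simp]:
  "finite S \<Longrightarrow> (\<Sum>c\<in>S. (if c = i then \<alpha> else 0)^2) = (if i \<in> S then \<alpha>^2 else (0::real))"
proof -
  assume S: "finite S"
  have "(\<Sum>c\<in>S. (if c = i then \<alpha> else 0)^2) = (\<Sum>c\<in>S. if c = i then \<alpha>^2 else 0)"
    by (rule sum.cong) auto
  then show ?thesis using S by simp
qed

lemma lyap_use:
  assumes L: "lyapunov_like (p+q) A (M_cone p q)" and x: "x \<in> M_cone p q"
    and s: "s \<in> carrier_vec (p+q)" and y: "\<forall>k<p. s $ k \<ge> unorm p q s" and o: "x \<bullet> s = 0"
  shows "(A *\<^sub>v x) \<bullet> s = 0"
proof -
  have "(x, s) \<in> compl_set (p+q) (M_cone p q)"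
    unfolding compl_set_def using x dual_mem[OF s y] o by auto
  then show ?thesis using L unfolding lyapunov_like_def by auto
qed

lemma lyap_mk:
  assumes L: "lyapunov_like (p+q) A (M_cone p q)" and A: "A \<in> carrier_mat (p+q) (p+q)"
    and x: "mk p q f g \<in> M_cone p q"
    and y: "\<forall>k<p. y k \<ge> sqrt (\<Sum>j<q. (v j)^2)"
    and o: "(\<Sum>i<p. f i * y i) + (\<Sum>j<q. g j * v j) = 0"
  shows "(\<Sum>r<p. (A *\<^sub>v mk p q f g) $ r * y r) + (\<Sum>j<q. (A *\<^sub>v mk p q f g) $ (p+j) * v j) = 0"
proof -
  have o': "mk p q f g \<bullet> mk p q y v = 0" using o by (subst sp_split[of _ p q]) auto
  have "(A *\<^sub>v mk p q f g) \<bullet> mk p q y v = 0"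
    by (rule lyap_use[OF L x]) (use y o' in \<open>auto simp: unorm_mk\<close>)
  moreover have "A *\<^sub>v mk p q f g \<in> carrier_vec (p+q)" using A by simp
  ultimately show ?thesis by (subst (asm) sp_split[of _ p q]) auto
qed

lemma lyap_F1:
  assumes L: "lyapunov_like (p+q) A (M_cone p q)" and A: "A \<in> carrier_mat (p+q) (p+q)"
    and i: "i < p" and k: "k < p" and ik: "i \<noteq> k"
  shows "A $$ (k,i) = 0"
proof -
  have "(\<Sum>r<p. (A *\<^sub>v mk p q (\<lambda>c. if c = i then 1 else 0) (\<lambda>_. 0)) $ r * (if r = k then 1 else 0))
      + (\<Sum>j<q. (A *\<^sub>v mk p q (\<lambda>c. if c = i then 1 else 0) (\<lambda>_. 0)) $ (p+j) * 0) = 0"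
    by (rule lyap_mk[OF L A]) (use i k ik in \<open>auto simp: M_mk\<close>)
  then show ?thesis using Axe[OF A, of k] i k by simp
qed




lemma sum_two:
  "finite S \<Longrightarrow> (\<Sum>r\<in>S. X r * (if r = k then 2 else 1)) = (\<Sum>r\<in>S. X r) + (if k \<in> S then X k else (0::real))"
proof -
  assume S: "finite S"
  have "(\<Sum>r\<in>S. X r * (if r = k then 2 else 1)) = (\<Sum>r\<in>S. X r + X r * (if r = k then 1 else 0))"
    by (rule sum.cong) auto
  then show ?thesis using S by (simp add: sum.distrib)
qed

lemma lyap_P2raw:
  assumes L: "lyapunov_like (p+q) A (M_cone p q)" and A: "A \<in> carrier_mat (p+q) (p+q)"
    and i: "i < p" and j: "j < q" and e: "\<epsilon> = 1 \<or> \<epsilon> = -1"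
  shows "(\<Sum>r<p. A $$ (r,i) + A $$ (r,p+j) * \<epsilon>) - (A $$ (p+j,i) + A $$ (p+j,p+j) * \<epsilon>) * \<epsilon> = 0"
    and "k < p \<Longrightarrow> k \<noteq> i \<Longrightarrow> A $$ (k,i) + A $$ (k,p+j) * \<epsilon> = 0"
proof -
  define x where "x = mk p q (\<lambda>c. if c = i then 1 else 0) (\<lambda>m. if m = j then \<epsilon> else 0)"
  have e2: "\<epsilon>^2 = 1" using e by auto
  have sq: "sqrt (\<epsilon>^2) = 1" using e2 by simp
  have xM: "x \<in> M_cone p q" unfolding x_def M_mk using i j sq by auto
  have Ax: "(A *\<^sub>v x) $ r = A $$ (r,i) + A $$ (r,p+m) * \<epsilon>" if "r < p+q" "m = j" for r m
    unfolding x_def using Axe[OF A that(1)] i j that by simp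
  have r1: "(\<Sum>r<p. (A *\<^sub>v x) $ r * 1) + (\<Sum>m<q. (A *\<^sub>v x) $ (p+m) * (if m = j then - \<epsilon> else 0)) = 0"
    unfolding x_def by (rule lyap_mk[OF L A]) (use i j e2 sq xM[unfolded x_def] in \<open>auto simp: power2_eq_square\<close>)
  have S1: "(\<Sum>r<p. (A *\<^sub>v x) $ r) = (\<Sum>r<p. A $$ (r,i) + A $$ (r,p+j) * \<epsilon>)"
    using Ax by (intro sum.cong) auto
  show "(\<Sum>r<p. A $$ (r,i) + A $$ (r,p+j) * \<epsilon>) - (A $$ (p+j,i) + A $$ (p+j,p+j) * \<epsilon>) * \<epsilon> = 0"
    using r1 S1 Ax[of "p+j" j] j by simp
  assume k: "k < p" "k \<noteq> i"
  have r2: "(\<Sum>r<p. (A *\<^sub>v x) $ r * (if r = k then 2 else 1)) + (\<Sum>m<q. (A *\<^sub>v x) $ (p+m) * (if m = j then - \<epsilon> else 0)) = 0"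
    unfolding x_def by (rule lyap_mk[OF L A]) (use i j k e2 sq xM[unfolded x_def] in \<open>auto simp: power2_eq_square\<close>)
  have "(A *\<^sub>v x) $ k = 0" using r1 r2 k by (simp add: sum_two)
  then show "A $$ (k,i) + A $$ (k,p+j) * \<epsilon> = 0" using Ax[of k j] k by simp
qed




context
  fixes p q :: nat and A :: "real mat"
  assumes L: "lyapunov_like (p+q) A (M_cone p q)" and A: "A \<in> carrier_mat (p+q) (p+q)"
    and p1: "p > 1" and q0: "q > 0"
begin

lemma F1: "i < p \<Longrightarrow> k < p \<Longrightarrow> i \<noteq> k \<Longrightarrow> A $$ (k,i) = 0"
  using lyap_F1[OF L A] by blast

lemma F2: assumes k: "k < p" and j: "j < q" shows "A $$ (k,p+j) = 0"
proof -
  define i where "i = (if k = 0 then 1 else (0::nat))"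
  have i: "i < p" "i \<noteq> k" unfolding i_def using p1 by auto
  have "A $$ (k,i) + A $$ (k,p+j) * 1 = 0" using lyap_P2raw(2)[of p q A i j 1 k] L A i j k by simp
  then show ?thesis using F1[OF i(1) k i(2)] by simp
qed

lemma F3: assumes i: "i < p" and j: "j < q" shows "A $$ (p+j,i) = 0" "A $$ (p+j,p+j) = A $$ (i,i)"
proof -
  have S: "(\<Sum>r<p. A $$ (r,i) + A $$ (r,p+j) * \<epsilon>) = A $$ (i,i)" for \<epsilon>
  proof -
    have "(\<Sum>r<p. A $$ (r,i) + A $$ (r,p+j) * \<epsilon>) = (\<Sum>r<p. if r = i then A $$ (i,i) else 0)"
      using F1 F2 i j by (intro sum.cong) auto
    then show ?thesis using i by simp
  qed
  have e1: "A $$ (i,i) - (A $$ (p+j,i) + A $$ (p+j,p+j)) = 0"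
    using lyap_P2raw(1)[OF L A i j, of 1] S[of 1] by simp
  have e2: "A $$ (i,i) + (A $$ (p+j,i) - A $$ (p+j,p+j)) = 0"
    using lyap_P2raw(1)[OF L A i j, of "-1"] S[of "-1"] by simp
  show "A $$ (p+j,i) = 0" "A $$ (p+j,p+j) = A $$ (i,i)" using e1 e2 by linarith+
qed

lemma F4: assumes j: "j < q" and l: "l < q" and jl: "j \<noteq> l"
  shows "A $$ (p+j,p+l) + A $$ (p+l,p+j) = 0"
proof -
  have p0: "0 < p" using p1 by simp
  define g where "g = (\<lambda>m. (if m = j then 1 else 0) + (if m = l then (1::real) else 0))"
  define f where "f = (\<lambda>c::nat. if c = 0 then sqrt 2 else (0::real))"
  have g2: "(\<Sum>m<q. (g m)^2) = 2"
  proof -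
    have "(\<Sum>m<q. (g m)^2) = (\<Sum>m<q. (if m = j then 1 else 0) + (if m = l then (1::real) else 0))"
      unfolding g_def using jl by (intro sum.cong) auto
    then show ?thesis using j l by (simp add: sum.distrib)
  qed
  have g2': "(\<Sum>m<q. (- g m)^2) = 2" using g2 by simp
  have gv: "(\<Sum>m<q. g m * - g m) = -2" using g2 by (simp add: power2_eq_square sum_negf)
  have xM: "mk p q f g \<in> M_cone p q" unfolding M_mk g2 f_def using p0 by auto
  have Ax: "(A *\<^sub>v mk p q f g) $ r = A $$ (r,0) * sqrt 2 + A $$ (r,p+j) + A $$ (r,p+l)" if r: "r < p+q" for r
  proof -
    have "(\<Sum>m<q. A $$ (r,p+m) * g m) = (\<Sum>m<q. A $$ (r,p+m) * (if m = j then 1 else 0)) + (\<Sum>m<q. A $$ (r,p+m) * (if m = l then 1 else 0))"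
      unfolding g_def by (simp add: distrib_left sum.distrib)
    then show ?thesis using Axe[OF A r] j l p0 unfolding f_def by simp
  qed
  have R: "(\<Sum>r<p. (A *\<^sub>v mk p q f g) $ r * sqrt 2) + (\<Sum>m<q. (A *\<^sub>v mk p q f g) $ (p+m) * - g m) = 0"
    by (rule lyap_mk[OF L A xM]) (use g2' gv p0 in \<open>auto simp: f_def\<close>)
  have T1: "(\<Sum>r<p. (A *\<^sub>v mk p q f g) $ r * sqrt 2) = 2 * A $$ (0,0)"
  proof -
    have "(\<Sum>r<p. (A *\<^sub>v mk p q f g) $ r * sqrt 2) = (\<Sum>r<p. if r = 0 then 2 * A $$ (0,0) else 0)"
    proof (intro sum.cong refl)
      fix r assume "r \<in> {..<p}"
      then have r: "r < p" by simp
      show "(A *\<^sub>v mk p q f g) $ r * sqrt 2 = (if r = 0 then 2 * A $$ (0,0) else 0)"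
        using Ax[of r] r F2[OF r j] F2[OF r l] F1[OF p0 r] by (cases "r = 0") auto
    qed
    then show ?thesis using p0 by simp
  qed
  have T2: "(\<Sum>m<q. (A *\<^sub>v mk p q f g) $ (p+m) * - g m)
      = - ((A *\<^sub>v mk p q f g) $ (p+j) + (A *\<^sub>v mk p q f g) $ (p+l))"
  proof -
    have gen: "(\<Sum>m<q. X m * - g m) = - (X j + X l)" for X :: "nat \<Rightarrow> real"
    proof -
      have "(\<Sum>m<q. X m * - g m) = - ((\<Sum>m<q. X m * (if m = j then 1 else 0)) + (\<Sum>m<q. X m * (if m = l then 1 else 0)))"
        unfolding g_def sum.distrib[symmetric] sum_negf[symmetric] by (intro sum.cong) (auto simp: algebra_simps)
      then show ?thesis using j l by simp
    qed
    show ?thesis by (rule gen)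
  qed
  have "(A *\<^sub>v mk p q f g) $ (p+j) = A $$ (0,0) + A $$ (p+j,p+l)"
    using Ax[of "p+j"] j F3[OF p0 j] by simp
  moreover have "(A *\<^sub>v mk p q f g) $ (p+l) = A $$ (p+l,p+j) + A $$ (0,0)"
    using Ax[of "p+l"] l F3[OF p0 l] by simp
  ultimately show ?thesis using R T1 T2 by simp
qed

end




lemma lyap_good:
  assumes L: "lyapunov_like (p+q) A (M_cone p q)" and A: "A \<in> carrier_mat (p+q) (p+q)"
    and p1: "p > 1" and q0: "q > 0"
  shows "good p q (A $$ (0,0)) A"
proof -
  note F1 = F1[OF L A p1 q0] and F2 = F2[OF L A p1 q0] and F3 = F3[OF L A p1 q0] and F4 = F4[OF L A p1 q0]
  have p0: "0 < p" using p1 by simp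
  have diag: "A $$ (k,k) = A $$ (0,0)" if "k < p" for k
    using F3(2)[OF that q0] F3(2)[OF p0 q0] by simp
  have diag2: "A $$ (p+m,p+m) = A $$ (0,0)" if "m < q" for m
    using F3(2)[OF p0 that] by simp
  have rows: "\<forall>k<p. \<forall>c<p+q. A $$ (k,c) = (if c = k then A $$ (0,0) else 0)"
  proof (intro allI impI)
    fix k c assume k: "k < p" and c: "c < p+q"
    show "A $$ (k,c) = (if c = k then A $$ (0,0) else 0)"
    proof (cases "c < p")
      case True
      show ?thesis
      proof (cases "c = k")
        case True then show ?thesis using diag[OF k] by simp
      next
        case False then show ?thesis using F1[OF \<open>c < p\<close> k False] by simp
      qed
    next
      case False
      define m where "m = c - p"
      have m1: "c = p + m" using False unfolding m_def by simp
      have m2: "m < q" using c False unfolding m_def by simp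
      have "c \<noteq> k" using k False by simp
      then show ?thesis using F2[OF k m2] m1 by simp
    qed
  qed
  have sym: "\<forall>i<p+q. \<forall>j<p+q. A $$ (i,j) + A $$ (j,i) = (if i = j then 2 * A $$ (0,0) else 0)"
  proof (intro allI impI)
    fix i j assume i: "i < p+q" and j: "j < p+q"
    show "A $$ (i,j) + A $$ (j,i) = (if i = j then 2 * A $$ (0,0) else 0)"
    proof (cases "i < p")
      case iT: True
      show ?thesis
      proof (cases "j < p")
        case jT: True
        show ?thesis
        proof (cases "i = j")
          case True then show ?thesis using diag[OF iT] by simp
        next
          case False
          have "A $$ (j,i) = 0" using F1[OF iT jT False] .
          moreover have "A $$ (i,j) = 0" using F1[OF jT iT] False by simp
          ultimately show ?thesis using False by simp
        qed
      next
        case False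
        define m where "m = j - p"
        have m1: "j = p + m" using False unfolding m_def by simp
        have m2: "m < q" using j False unfolding m_def by simp
        have "i \<noteq> j" using iT False by auto
        then show ?thesis using F2[OF iT m2] F3(1)[OF iT m2] m1 by simp
      qed
    next
      case iF: False
      define m where "m = i - p"
      have m1: "i = p + m" using iF unfolding m_def by simp
      have m2: "m < q" using i iF unfolding m_def by simp
      show ?thesis
      proof (cases "j < p")
        case True
        have "i \<noteq> j" using iF True by auto
        then show ?thesis using m1 F2[OF True m2] F3(1)[OF True m2] by simp
      next
        case False
        define m' where "m' = j - p"
        have m1': "j = p + m'" using False unfolding m'_def by simp
        have m2': "m' < q" using j False unfolding m'_def by simp
        show ?thesis
        proof (cases "m = m'")
          case True then show ?thesis using m1 m1' diag2[OF m2] by simp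
        next
          case False
          have "i \<noteq> j" using m1 m1' False by simp
          then show ?thesis using m1 m1' F4[OF m2 m2' False] by simp
        qed
      qed
    qed
  qed
  show ?thesis unfolding good_def using A rows sym by blast
qed




lemma good_neg:
  assumes g: "good p q a A" shows "good p q (-a) (-A)"
proof -
  have A: "A \<in> carrier_mat (p+q) (p+q)" using g unfolding good_def by auto
  have r: "\<forall>k<p. \<forall>c<p+q. A $$ (k,c) = (if c = k then a else 0)"
    and s: "\<forall>i<p+q. \<forall>j<p+q. A $$ (i,j) + A $$ (j,i) = (if i = j then 2 * a else 0)"
    using g unfolding good_def by auto
  have "\<forall>k<p. \<forall>c<p+q. (-A) $$ (k,c) = (if c = k then -a else 0)"
    using r A by auto
  moreover have "\<forall>i<p+q. \<forall>j<p+q. (-A) $$ (i,j) + (-A) $$ (j,i) = (if i = j then 2 * (-a) else 0)"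
  proof (intro allI impI)
    fix i j assume i: "i < p+q" and j: "j < p+q"
    have "(-A) $$ (i,j) + (-A) $$ (j,i) = - (A $$ (i,j) + A $$ (j,i))" using A i j by simp
    then show "(-A) $$ (i,j) + (-A) $$ (j,i) = (if i = j then 2 * (-a) else 0)" using s i j by simp
  qed
  moreover have "-A \<in> carrier_mat (p+q) (p+q)" using A by simp
  ultimately show ?thesis unfolding good_def by blast
qed

lemma neg_commute:
  fixes A :: "real mat"
  assumes A: "A \<in> carrier_mat n n"
  shows "A * (-A) = (-A) * A"
proof (rule eq_matI)
  fix i j assume "i < dim_row ((-A) * A)" "j < dim_col ((-A) * A)"
  then have i: "i < n" and j: "j < n" using A by auto
  have nA: "-A \<in> carrier_mat n n" using A by simp
  show "(A * (-A)) $$ (i,j) = ((-A) * A) $$ (i,j)"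
    using mult_entry[OF A nA i j] mult_entry[OF nA A i j] A i j by simp
qed (use A in auto)

lemma mat_exp_zero:
  fixes A :: "real mat"
  assumes A: "A \<in> carrier_mat n n" and Z: "Z = A + (-A) \<or> Z = (-A) + A"
  shows "mat_exp t Z = 1\<^sub>m n"
proof -
  have "Z = 0 \<cdot>\<^sub>m 1\<^sub>m n"
    by (rule eq_matI) (use A Z in auto)
  then have "mat_exp t Z = exp (t * 0) \<cdot>\<^sub>m 1\<^sub>m n" using mat_exp_scalar by simp
  also have "\<dots> = 1\<^sub>m n" by (rule eq_matI) auto
  finally show ?thesis .
qed

lemma good_aut:
  assumes g: "good p q a A"
  shows "mat_exp t A \<in> Aut (p + q) (M_cone p q) \<and> positive_operator (mat_exp t A) (M_cone p q)"
proof -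
  have A: "A \<in> carrier_mat (p+q) (p+q)" using g unfolding good_def by auto
  have nA: "-A \<in> carrier_mat (p+q) (p+q)" using A by simp
  define B where "B = mat_exp t A"
  define B' where "B' = mat_exp t (-A)"
  have B: "B \<in> carrier_mat (p+q) (p+q)" unfolding B_def using A by simp
  have B': "B' \<in> carrier_mat (p+q) (p+q)" unfolding B'_def using nA by simp
  have BB': "B * B' = 1\<^sub>m (p+q)"
    unfolding B_def B'_def using mat_exp_mult[OF A nA neg_commute[OF A]] mat_exp_zero[OF A] by simp
  have B'B: "B' * B = 1\<^sub>m (p+q)"
    unfolding B_def B'_def using mat_exp_mult[OF nA A neg_commute[OF A, symmetric]] mat_exp_zero[OF A] by simp
  have inv: "invertible_mat B"
    unfolding invertible_mat_def inverts_mat_def square_mat.simps using B B' BB' B'B by auto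
  have sub: "(\<lambda>x. B *\<^sub>v x) ` M_cone p q \<subseteq> M_cone p q"
    unfolding B_def using good_pos[OF g] by auto
  have sup: "M_cone p q \<subseteq> (\<lambda>x. B *\<^sub>v x) ` M_cone p q"
  proof
    fix v assume v: "v \<in> M_cone p q"
    have vc: "v \<in> carrier_vec (p+q)" using v unfolding M_cone_def by auto
    have w: "B' *\<^sub>v v \<in> M_cone p q" unfolding B'_def using good_pos[OF good_neg[OF g] v] .
    have "B *\<^sub>v (B' *\<^sub>v v) = v"
      using assoc_mult_mat_vec[OF B B' vc, symmetric] BB' vc by simp
    then show "v \<in> (\<lambda>x. B *\<^sub>v x) ` M_cone p q" using w by (metis image_eqI)
  qed
  show ?thesis
    unfolding Aut_def positive_operator_def B_def[symmetric] using B inv sub sup by auto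
qed




theorem mainTheorem2:
  fixes p q :: nat and A :: "real mat"
  assumes "p > 1" and "q > 0"
    and "A \<in> carrier_mat (p + q) (p + q)"
    and "positive_operator A (M_cone p q)"
  shows "(\<forall>i<p. row A i \<in> L_cone p q)
    \<and> (\<forall>i<p. col A i \<in> M_cone p q)
    \<and> (\<forall>i<p. \<forall>u \<in> carrier_vec q. vnorm u = 1 \<longrightarrow>
          vec (p + q) (\<lambda>k. col A i $ k + (\<Sum>j<q. u $ j * col A (p + j) $ k)) \<in> M_cone p q)
    \<and> (\<forall>i<p. \<forall>j<q. col A i + col A (p + j) \<in> M_cone p q)
    \<and> (lyapunov_like (p + q) A (M_cone p q) \<longrightarrow>
          (\<forall>t::real. mat_exp t A \<in> Aut (p + q) (M_cone p q)
                     \<and> positive_operator (mat_exp t A) (M_cone p q)))"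
proof (intro conjI allI impI ballI)
  note A = assms(3) and P = assms(4)
  fix i assume i: "i < p"
  show "row A i \<in> L_cone p q" by (rule part1[OF A P i])
next
  note A = assms(3) and P = assms(4)
  fix i assume i: "i < p"
  have "col A i = vec (p + q) (\<lambda>k. col A i $ k + (\<Sum>j<q. (\<lambda>_. 0) j * col A (p + j) $ k))"
    by (rule eq_vecI) (use A in auto)
  also have "\<dots> = A *\<^sub>v mk p q (\<lambda>c. if c = i then 1 else 0) (\<lambda>_. 0)" by (rule col_as[OF A i])
  also have "\<dots> \<in> M_cone p q" by (rule part2[OF A P i]) simp
  finally show "col A i \<in> M_cone p q" .
next
  note A = assms(3) and P = assms(4)
  fix i u assume i: "i < p" and u: "u \<in> carrier_vec q" and un: "vnorm u = 1"
  have "vec (p + q) (\<lambda>k. col A i $ k + (\<Sum>j<q. u $ j * col A (p + j) $ k)) = A *\<^sub>v mk p q (\<lambda>c. if c = i then 1 else 0) (\<lambda>j. u $ j)"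
    by (rule col_as[OF A i])
  also have "\<dots> \<in> M_cone p q"
    by (rule part2[OF A P i]) (use u un in \<open>simp add: vnorm_def\<close>)
  finally show "vec (p + q) (\<lambda>k. col A i $ k + (\<Sum>j<q. u $ j * col A (p + j) $ k)) \<in> M_cone p q" .
next
  note A = assms(3) and P = assms(4)
  fix i j assume i: "i < p" and j: "j < q"
  have "col A i + col A (p + j) = vec (p + q) (\<lambda>k. col A i $ k + (\<Sum>m<q. (if m = j then 1 else 0) * col A (p + m) $ k))"
    by (rule eq_vecI) (use A j in auto)
  also have "\<dots> = A *\<^sub>v mk p q (\<lambda>c. if c = i then 1 else 0) (\<lambda>m. if m = j then 1 else 0)" by (rule col_as[OF A i])
  also have "\<dots> \<in> M_cone p q" by (rule part2[OF A P i]) (use j in simp)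
  finally show "col A i + col A (p + j) \<in> M_cone p q" .
next
  fix t :: real
  assume L: "lyapunov_like (p + q) A (M_cone p q)"
  have g: "good p q (A $$ (0,0)) A" by (rule lyap_good[OF L assms(3) assms(1) assms(2)])
  show "mat_exp t A \<in> Aut (p + q) (M_cone p q)" using good_aut[OF g] by blast
next
  fix t :: real
  assume L: "lyapunov_like (p + q) A (M_cone p q)"
  have g: "good p q (A $$ (0,0)) A" by (rule lyap_good[OF L assms(3) assms(1) assms(2)])
  show "positive_operator (mat_exp t A) (M_cone p q)" using good_aut[OF g] by blast
qed


end
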